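(* Let $\alpha>0$, let $X_{0-}$ be a real-valued random variable and let $Z$ be a continuous stochastic process with $Z_0=0$, independent of $X_{0-}$, satisfying the crossing property (see context). For $\ell\in M$ define $\Gamma[\ell]_t=\mathbb{P}(\tau[\ell]\le t)$ with $\tau[\ell]=\inf\{t\ge0:X_{0-}+Z_t-\alpha\ell_t\le0\}$, and for $\Delta>0$ define $\Gamma_\Delta[\ell]_t=\mathbb{P}(\tau^\Delta[\ell]\le t)$ with $\tau^\Delta[\ell]=\inf\{t\ge0:X_{0-}+Z_{\Delta\lfloor t/\Delta\rfloor}-\alpha\ell_{\Delta\lfloor t/\Delta\rfloor}\le0\}$. Let $\Delta_n>0$ with $\Delta_n\to0$ and suppose $\ell^n\to\ell$ in $M$. Then $\lim_{n\to\infty}\Gamma_{\Delta_n}[\ell^n]=\Gamma[\ell]$ in $M$.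
   Context: Crossing property: for every stopping time $\tau$ with respect to the natural filtration of $X_{0-}+Z$ and every $h>0$, $\mathbb{P}(\tau<\infty,\ \inf_{0\le s\le h}(Z_{\tau+s}-Z_\tau)=0)=0$. $M$ is the set of càdlàg increasing functions $\ell:\overline{\mathbb{R}}\to[0,1]$ ($\overline{\mathbb{R}}$ the two-point compactification of $\mathbb{R}$) with $\ell_{0-}=0$ and $\ell_\infty=1$, with the topology: $\ell^n\to\ell$ iff $\ell^n_t\to\ell_t$ for all $t\in[0,\infty]$ at which $\ell$ is continuous. *)

theory Defs
  imports "HOL-Probability.Probability"
begin

definition in_M :: "(ereal \<Rightarrow> real) \<Rightarrow> bool" where
  "in_M l \<longleftrightarrow> mono l \<and> (\<forall>t. l t \<in> {0..1})
     \<and> (\<forall>t. continuous (at t within {t..}) l)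
     \<and> (\<forall>t. \<exists>L. (l \<longlongrightarrow> L) (at_left t))
     \<and> (l \<longlongrightarrow> 0) (at_left 0) \<and> l \<infinity> = 1"

definition conv_M :: "(nat \<Rightarrow> ereal \<Rightarrow> real) \<Rightarrow> (ereal \<Rightarrow> real) \<Rightarrow> bool" where
  "conv_M ls l \<longleftrightarrow> (\<forall>t. 0 \<le> t \<longrightarrow> isCont l t \<longrightarrow> (\<lambda>n. ls n t) \<longlonglongrightarrow> l t)"

definition nat_filtration :: "'a measure \<Rightarrow> (real \<Rightarrow> 'a \<Rightarrow> real) \<Rightarrow> ereal \<Rightarrow> 'a measure" where
  "nat_filtration P Y t = sigma (space P)
     {Y s -` B \<inter> space P | s B. 0 \<le> s \<and> ereal s \<le> t \<and> B \<in> sets borel}"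

definition crossing_property ::
  "'a measure \<Rightarrow> ('a \<Rightarrow> real) \<Rightarrow> (real \<Rightarrow> 'a \<Rightarrow> real) \<Rightarrow> bool" where
  "crossing_property P X Z \<longleftrightarrow>
     (\<forall>\<tau> :: 'a \<Rightarrow> ereal. stopping_time (nat_filtration P (\<lambda>s \<omega>. X \<omega> + Z s \<omega>)) \<tau> \<longrightarrow>
       (\<forall>h>0. AE \<omega> in P. \<not> (\<tau> \<omega> < \<infinity> \<and>
          (INF s\<in>{0..h}. Z (real_of_ereal (\<tau> \<omega>) + s) \<omega> - Z (real_of_ereal (\<tau> \<omega>)) \<omega>) = 0)))"

text \<open>Hitting time tau[l] (inf of the empty set is infinity).\<close>
definition hit_time ::
  "real \<Rightarrow> ('a \<Rightarrow> real) \<Rightarrow> (real \<Rightarrow> 'a \<Rightarrow> real) \<Rightarrow> (ereal \<Rightarrow> real) \<Rightarrow> 'a \<Rightarrow> ereal" where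
  "hit_time \<alpha> X Z l \<omega> = Inf {ereal t | t. 0 \<le> t \<and> X \<omega> + Z t \<omega> - \<alpha> * l (ereal t) \<le> 0}"

definition hit_time_disc ::
  "real \<Rightarrow> ('a \<Rightarrow> real) \<Rightarrow> (real \<Rightarrow> 'a \<Rightarrow> real) \<Rightarrow> real \<Rightarrow> (ereal \<Rightarrow> real) \<Rightarrow> 'a \<Rightarrow> ereal" where
  "hit_time_disc \<alpha> X Z \<Delta> l \<omega> = Inf {ereal t | t. 0 \<le> t \<and>
      X \<omega> + Z (\<Delta> * of_int \<lfloor>t / \<Delta>\<rfloor>) \<omega> - \<alpha> * l (ereal (\<Delta> * of_int \<lfloor>t / \<Delta>\<rfloor>)) \<le> 0}"

definition Gam ::
  "'a measure \<Rightarrow> real \<Rightarrow> ('a \<Rightarrow> real) \<Rightarrow> (real \<Rightarrow> 'a \<Rightarrow> real) \<Rightarrow> (ereal \<Rightarrow> real) \<Rightarrow> ereal \<Rightarrow> real" where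
  "Gam P \<alpha> X Z l t = measure P {\<omega> \<in> space P. hit_time \<alpha> X Z l \<omega> \<le> t}"

definition Gam_disc ::
  "'a measure \<Rightarrow> real \<Rightarrow> ('a \<Rightarrow> real) \<Rightarrow> (real \<Rightarrow> 'a \<Rightarrow> real) \<Rightarrow> real \<Rightarrow> (ereal \<Rightarrow> real) \<Rightarrow> ereal \<Rightarrow> real" where
  "Gam_disc P \<alpha> X Z \<Delta> l t = measure P {\<omega> \<in> space P. hit_time_disc \<alpha> X Z \<Delta> l \<omega> \<le> t}"

end

theory Submission
  imports Defs
begin

lemma rc:
  assumes "in_M l" "0 < e"
  shows "\<exists>d>0. \<forall>v. s \<le> v \<longrightarrow> v < s + d \<longrightarrow> l (ereal v) < l (ereal s) + e"
proof -
  have "continuous (at (ereal s) within {ereal s..}) l" using assms(1) unfolding in_M_def by blast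
  then have "(l \<longlongrightarrow> l (ereal s)) (at (ereal s) within {ereal s..})" by (simp add: continuous_within)
  then have "eventually (\<lambda>x. l x < l (ereal s) + e) (at (ereal s) within {ereal s..})"
    using assms(2) by (intro order_tendstoD(2)) auto
  then have "eventually (\<lambda>x. x \<noteq> ereal s \<longrightarrow> x \<in> {ereal s..} \<longrightarrow> l x < l (ereal s) + e) (nhds (ereal s))"
    by (simp add: eventually_at_filter)
  then have "eventually (\<lambda>x. ereal x \<noteq> ereal s \<longrightarrow> ereal x \<in> {ereal s..} \<longrightarrow> l (ereal x) < l (ereal s) + e) (nhds s)"
    by (simp add: nhds_ereal eventually_filtermap)
  then obtain d where d: "d > 0" "\<And>x. dist x s < d \<Longrightarrow> ereal x \<noteq> ereal s \<longrightarrow> ereal x \<in> {ereal s..} \<longrightarrow> l (ereal x) < l (ereal s) + e"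
    unfolding eventually_nhds_metric by blast
  show ?thesis
  proof (intro exI[of _ d] conjI allI impI)
    fix v assume "s \<le> v" "v < s + d"
    show "l (ereal v) < l (ereal s) + e"
    proof (cases "v = s")
      case True thus ?thesis using assms(2) by simp
    next
      case False thus ?thesis using d(2)[of v] \<open>s \<le> v\<close> \<open>v < s + d\<close> by (auto simp: dist_real_def)
    qed
  qed (use d in auto)
qed

lemma contpt:
  assumes "in_M l" "a < b"
  shows "\<exists>u. a < u \<and> u < b \<and> isCont l (ereal u)"
proof -
  have m: "mono (l \<circ> ereal)" using assms(1) unfolding in_M_def mono_def by auto
  obtain u where u: "u \<in> {a<..<b}" "u \<notin> {x. \<not> isCont (l \<circ> ereal) x}"
    using open_minus_countable[OF mono_ctble_discont[OF m], of "{a<..<b}"] assms(2) by auto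
  have "(l \<longlongrightarrow> l (ereal u)) (at (ereal u))"
    unfolding at_ereal filterlim_filtermap using u(2) by (simp add: continuous_at o_def)
  then have "isCont l (ereal u)" by (simp add: continuous_at)
  with u show ?thesis by auto
qed

lemma cover:
  fixes K :: "'b::topological_space set"
  assumes "compact K"
    and "\<And>s. s \<in> K \<Longrightarrow> \<exists>U. open U \<and> s \<in> U \<and> eventually (\<lambda>n. \<forall>v\<in>U \<inter> K. P n v) F"
  shows "eventually (\<lambda>n. \<forall>v\<in>K. P n v) F"
proof -
  obtain U where U: "\<And>s. s \<in> K \<Longrightarrow> open (U s) \<and> s \<in> U s \<and> eventually (\<lambda>n. \<forall>v\<in>U s \<inter> K. P n v) F"
    using assms(2) by metis
  obtain C where C: "C \<subseteq> K" "finite C" "K \<subseteq> (\<Union>c\<in>C. U c)"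
    using compactE_image[OF assms(1), of K U] U by blast
  have "eventually (\<lambda>n. \<forall>c\<in>C. \<forall>v\<in>U c \<inter> K. P n v) F"
    using C U by (subst eventually_ball_finite) auto
  then show ?thesis
    by eventually_elim (use C in blast)
qed

lemma lsc:
  fixes y :: "real \<Rightarrow> real"
  assumes "in_M l" "\<alpha> > 0" "continuous_on {0..} y" "0 \<le> c" "y c - \<alpha> * l (ereal c) > m"
  shows "\<exists>d>0. \<forall>v. 0 \<le> v \<longrightarrow> \<bar>v - c\<bar> < d \<longrightarrow> y v - \<alpha> * l (ereal v) > m"
proof -
  define e where "e = (y c - \<alpha> * l (ereal c) - m) / 2"
  have e: "e > 0" using assms(5) by (simp add: e_def)
  have "continuous (at c within {0..}) y" using assms(3,4) continuous_on_eq_continuous_within by auto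
  then obtain d1 where d1: "d1 > 0" "\<And>v. v \<in> {0..} \<Longrightarrow> dist v c < d1 \<Longrightarrow> dist (y v) (y c) < e"
    using e unfolding continuous_within_eps_delta by blast
  obtain d2 where d2: "d2 > 0" "\<And>v. c \<le> v \<Longrightarrow> v < c + d2 \<Longrightarrow> l (ereal v) < l (ereal c) + e / \<alpha>"
    using rc[OF assms(1), of "e/\<alpha>" c] e assms(2) by auto
  have mono: "mono l" using assms(1) by (simp add: in_M_def)
  show ?thesis
  proof (intro exI[of _ "min d1 d2"] conjI allI impI)
    fix v assume v: "0 \<le> v" "\<bar>v - c\<bar> < min d1 d2"
    have "dist (y v) (y c) < e" using d1(2)[of v] v by (auto simp: dist_real_def)
    then have 1: "y v > y c - e" by (auto simp: dist_real_def)
    have "l (ereal v) < l (ereal c) + e / \<alpha>"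
    proof (cases "c \<le> v")
      case True then show ?thesis using d2(2)[of v] v by auto
    next
      case False
      then have "l (ereal v) \<le> l (ereal c)" using monoD[OF mono, of "ereal v" "ereal c"] by auto
      then show ?thesis using e assms(2) by (smt (verit) divide_pos_pos)
    qed
    then have "\<alpha> * l (ereal v) < \<alpha> * l (ereal c) + e"
      using assms(2) by (simp add: field_simps)
    then show "y v - \<alpha> * l (ereal v) > m" using 1 unfolding e_def by (simp add: field_simps)
  qed (use d1 d2 in auto)
qed

lemma hit_nonneg: "0 \<le> hit_time \<alpha> X Z l \<omega>"
  unfolding hit_time_def by (rule Inf_greatest) auto

lemma hit_le_iff:
  assumes "in_M l" "\<alpha> > 0" "continuous_on {0..} (\<lambda>t. Z t \<omega>)"
  shows "hit_time \<alpha> X Z l \<omega> \<le> ereal c \<longleftrightarrow> (\<exists>s. 0 \<le> s \<and> s \<le> c \<and> X \<omega> + Z s \<omega> - \<alpha> * l (ereal s) \<le> 0)"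
proof
  assume "\<exists>s. 0 \<le> s \<and> s \<le> c \<and> X \<omega> + Z s \<omega> - \<alpha> * l (ereal s) \<le> 0"
  then obtain s where s: "0 \<le> s" "s \<le> c" "X \<omega> + Z s \<omega> - \<alpha> * l (ereal s) \<le> 0" by blast
  have "hit_time \<alpha> X Z l \<omega> \<le> ereal s"
    unfolding hit_time_def by (rule Inf_lower) (use s in auto)
  then show "hit_time \<alpha> X Z l \<omega> \<le> ereal c" using s(2) by (meson ereal_less_eq(3) order_trans)
next
  assume le: "hit_time \<alpha> X Z l \<omega> \<le> ereal c"
  show "\<exists>s. 0 \<le> s \<and> s \<le> c \<and> X \<omega> + Z s \<omega> - \<alpha> * l (ereal s) \<le> 0"
  proof (rule ccontr)
    assume H: "\<not> ?thesis"
    obtain c' where c': "c' > c" "\<And>t. 0 \<le> t \<Longrightarrow> X \<omega> + Z t \<omega> - \<alpha> * l (ereal t) \<le> 0 \<Longrightarrow> c' \<le> t"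
    proof (cases "c < 0")
      case True
      show ?thesis by (rule that[of 0]) (use True in auto)
    next
      case False
      have "continuous_on {0..} (\<lambda>t. X \<omega> + Z t \<omega>)"
        by (intro continuous_intros assms(3))
      moreover have "X \<omega> + Z c \<omega> - \<alpha> * l (ereal c) > 0" using H False by force
      ultimately obtain d where d: "d > 0" "\<And>v. 0 \<le> v \<Longrightarrow> \<bar>v - c\<bar> < d \<Longrightarrow> X \<omega> + Z v \<omega> - \<alpha> * l (ereal v) > 0"
        using lsc[OF assms(1,2), of "\<lambda>t. X \<omega> + Z t \<omega>" c 0] False by auto
      show ?thesis
      proof (rule that[of "c + d"])
        fix t assume t: "0 \<le> t" "X \<omega> + Z t \<omega> - \<alpha> * l (ereal t) \<le> 0"
        have "\<not> t \<le> c" using H t by auto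
        moreover have "\<not> \<bar>t - c\<bar> < d" using d(2)[of t] t by auto
        ultimately show "c + d \<le> t" by auto
      qed (use d in auto)
    qed
    have "ereal c' \<le> hit_time \<alpha> X Z l \<omega>"
      unfolding hit_time_def by (rule Inf_greatest) (use c' in auto)
    then show False using le c'(1) by (meson ereal_less_eq(3) leD order_trans)
  qed
qed

lemma disc_le_iff:
  assumes "\<Delta> > 0"
  shows "hit_time_disc \<alpha> X Z \<Delta> l \<omega> \<le> ereal c \<longleftrightarrow>
    (\<exists>k::nat. \<Delta> * real k \<le> c \<and> X \<omega> + Z (\<Delta> * real k) \<omega> - \<alpha> * l (ereal (\<Delta> * real k)) \<le> 0)"
proof
  assume "\<exists>k::nat. \<Delta> * real k \<le> c \<and> X \<omega> + Z (\<Delta> * real k) \<omega> - \<alpha> * l (ereal (\<Delta> * real k)) \<le> 0"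
  then obtain k :: nat where k: "\<Delta> * real k \<le> c" "X \<omega> + Z (\<Delta> * real k) \<omega> - \<alpha> * l (ereal (\<Delta> * real k)) \<le> 0"
    by blast
  have fl: "\<lfloor>\<Delta> * real k / \<Delta>\<rfloor> = int k" using assms by simp
  have "hit_time_disc \<alpha> X Z \<Delta> l \<omega> \<le> ereal (\<Delta> * real k)"
    unfolding hit_time_disc_def by (rule Inf_lower) (use k assms fl in auto)
  then show "hit_time_disc \<alpha> X Z \<Delta> l \<omega> \<le> ereal c" using k(1) by (meson ereal_less_eq(3) order_trans)
next
  assume le: "hit_time_disc \<alpha> X Z \<Delta> l \<omega> \<le> ereal c"
  show "\<exists>k::nat. \<Delta> * real k \<le> c \<and> X \<omega> + Z (\<Delta> * real k) \<omega> - \<alpha> * l (ereal (\<Delta> * real k)) \<le> 0"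
  proof (rule ccontr)
    assume H: "\<not> ?thesis"
    define c' where "c' = \<Delta> * (of_int \<lfloor>c / \<Delta>\<rfloor> + 1)"
    have c'c: "c' > c"
    proof -
      have "c / \<Delta> < of_int \<lfloor>c / \<Delta>\<rfloor> + 1" by linarith
      then show ?thesis using assms unfolding c'_def by (simp add: field_simps)
    qed
    have "ereal c' \<le> hit_time_disc \<alpha> X Z \<Delta> l \<omega>"
      unfolding hit_time_disc_def
    proof (rule Inf_greatest, clarify)
      fix t assume t: "0 \<le> t" "X \<omega> + Z (\<Delta> * of_int \<lfloor>t / \<Delta>\<rfloor>) \<omega> - \<alpha> * l (ereal (\<Delta> * of_int \<lfloor>t / \<Delta>\<rfloor>)) \<le> 0"
      have fnn: "\<lfloor>t / \<Delta>\<rfloor> \<ge> 0" using t assms by simp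
      define k where "k = nat \<lfloor>t / \<Delta>\<rfloor>"
      have rk: "real k = of_int \<lfloor>t / \<Delta>\<rfloor>" using fnn by (simp add: k_def)
      have "\<not>(\<Delta> * real k \<le> c \<and> X \<omega> + Z (\<Delta> * real k) \<omega> - \<alpha> * l (ereal (\<Delta> * real k)) \<le> 0)"
        using H by blast
      then have "\<not> \<Delta> * real k \<le> c" using t rk by auto
      then have "c / \<Delta> < of_int \<lfloor>t / \<Delta>\<rfloor>" using assms rk by (simp add: field_simps)
      then have "\<lfloor>c / \<Delta>\<rfloor> < \<lfloor>t / \<Delta>\<rfloor>" by linarith
      then have "of_int \<lfloor>c / \<Delta>\<rfloor> + 1 \<le> (of_int \<lfloor>t / \<Delta>\<rfloor> :: real)" by linarith
      also have "\<dots> \<le> t / \<Delta>" by linarith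
      finally show "ereal c' \<le> ereal t" using assms unfolding c'_def by (simp add: field_simps)
    qed
    then show False using le c'c by (meson ereal_less_eq(3) leD order_trans)
  qed
qed

lemma hit_meas:
  assumes "in_M l" "\<alpha> > 0" "space M = space P"
    "\<And>\<omega>. \<omega> \<in> space P \<Longrightarrow> continuous_on {0..} (\<lambda>t. Z t \<omega>)"
    "\<And>q. 0 \<le> q \<Longrightarrow> q \<le> c \<Longrightarrow> (\<lambda>\<omega>. X \<omega> + Z q \<omega>) \<in> borel_measurable M"
  shows "{\<omega> \<in> space M. hit_time \<alpha> X Z l \<omega> \<le> ereal c} \<in> sets M"
proof (cases "c < 0")
  case True
  have "{\<omega> \<in> space M. hit_time \<alpha> X Z l \<omega> \<le> ereal c} = {}"
  proof -
    have "ereal c < 0" using True by simp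
    then have "ereal c < hit_time \<alpha> X Z l \<omega>" for \<omega> using hit_nonneg[of \<alpha> X Z l \<omega>] by (rule less_le_trans)
    then show "{\<omega> \<in> space M. hit_time \<alpha> X Z l \<omega> \<le> ereal c} = {}" by (auto simp: not_le)
  qed
  then show ?thesis by (metis sets.empty_sets)
next
  case False
  have mono: "mono l" using assms(1) by (simp add: in_M_def)
  define f where "f \<omega> v = X \<omega> + Z v \<omega> - \<alpha> * l (ereal v)" for \<omega> v
  define Q where "Q \<omega> k = (f \<omega> c \<le> inverse (real (Suc k)) \<or>
      (\<exists>q::rat. 0 \<le> real_of_rat q \<and> real_of_rat q \<le> c \<and> f \<omega> (real_of_rat q) \<le> inverse (real (Suc k))))" for \<omega> k
  have eq: "hit_time \<alpha> X Z l \<omega> \<le> ereal c \<longleftrightarrow> (\<forall>k. Q \<omega> k)" if \<omega>: "\<omega> \<in> space P" for \<omega>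
  proof -
    have cont: "continuous_on {0..} (\<lambda>t. X \<omega> + Z t \<omega>)"
      by (intro continuous_intros assms(4) \<omega>)
    have "(\<exists>s. 0 \<le> s \<and> s \<le> c \<and> f \<omega> s \<le> 0) \<longleftrightarrow> (\<forall>k. Q \<omega> k)"
    proof
      assume "\<exists>s. 0 \<le> s \<and> s \<le> c \<and> f \<omega> s \<le> 0"
      then obtain s where s: "0 \<le> s" "s \<le> c" "f \<omega> s \<le> 0" by blast
      show "\<forall>k. Q \<omega> k"
      proof
        fix k
        have ik: "inverse (real (Suc k)) > 0" by simp
        show "Q \<omega> k"
        proof (cases "s = c")
          case True
          have "f \<omega> c \<le> inverse (real (Suc k))" using s(3)[unfolded True] ik by linarith
          then show ?thesis unfolding Q_def by blast
        next
          case False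
          have "continuous (at s within {0..}) (\<lambda>t. X \<omega> + Z t \<omega>)"
            using cont s(1) continuous_on_eq_continuous_within by auto
          then obtain d where d: "d > 0" "\<And>v. v \<in> {0..} \<Longrightarrow> dist v s < d \<Longrightarrow>
              dist (X \<omega> + Z v \<omega>) (X \<omega> + Z s \<omega>) < inverse (real (Suc k))"
            using ik unfolding continuous_within_eps_delta by blast
          have "s < min (s + d) c" using False s d by auto
          then obtain r where r: "r \<in> \<rat>" "s < r" "r < min (s + d) c" using Rats_dense_in_real by blast
          then obtain q where q: "r = real_of_rat q" by (auto elim: Rats_cases)
          have "dist (X \<omega> + Z r \<omega>) (X \<omega> + Z s \<omega>) < inverse (real (Suc k))"
            using d(2)[of r] r s by (auto simp: dist_real_def)
          moreover have "l (ereal s) \<le> l (ereal r)" using monoD[OF mono, of "ereal s" "ereal r"] r by auto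
          ultimately have "f \<omega> r \<le> inverse (real (Suc k))"
            using s(3) assms(2) unfolding f_def dist_real_def
            by (smt (verit, best) mult_left_mono)
          moreover have "0 \<le> real_of_rat q" using r s q by linarith
          ultimately show ?thesis unfolding Q_def using r s q by (intro disjI2 exI[of _ q]) auto
        qed
      qed
    next
      assume allQ: "\<forall>k. Q \<omega> k"
      show "\<exists>s. 0 \<le> s \<and> s \<le> c \<and> f \<omega> s \<le> 0"
      proof (rule ccontr)
        assume H: "\<not> ?thesis"
        have "eventually (\<lambda>k. \<forall>v\<in>{0..c}. f \<omega> v > inverse (real (Suc k))) sequentially"
        proof (rule cover)
          fix s assume s: "s \<in> {0..c}"
          then have fs: "f \<omega> s > 0" using H by force
          obtain d where d: "d > 0" "\<And>v. 0 \<le> v \<Longrightarrow> \<bar>v - s\<bar> < d \<Longrightarrow> X \<omega> + Z v \<omega> - \<alpha> * l (ereal v) > f \<omega> s / 2"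
            using lsc[OF assms(1,2) cont, of s "f \<omega> s / 2"] s fs unfolding f_def by auto
          have ev: "eventually (\<lambda>k. inverse (real (Suc k)) < f \<omega> s / 2) sequentially"
            using fs by (intro order_tendstoD(2)[OF LIMSEQ_inverse_real_of_nat]) auto
          show "\<exists>U. open U \<and> s \<in> U \<and> eventually (\<lambda>k. \<forall>v\<in>U \<inter> {0..c}. f \<omega> v > inverse (real (Suc k))) sequentially"
          proof (intro exI[of _ "ball s d"] conjI)
            show "eventually (\<lambda>k. \<forall>v\<in>ball s d \<inter> {0..c}. f \<omega> v > inverse (real (Suc k))) sequentially"
              using ev
            proof eventually_elim
              case (elim k)
              show ?case
              proof
                fix v assume v: "v \<in> ball s d \<inter> {0..c}"
                then have "f \<omega> v > f \<omega> s / 2" using d(2)[of v] unfolding f_def by (auto simp: dist_real_def abs_minus_commute)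
                then show "f \<omega> v > inverse (real (Suc k))" using elim by linarith
              qed
            qed
          qed (use d in auto)
        qed auto
        then obtain k where k: "\<forall>v\<in>{0..c}. f \<omega> v > inverse (real (Suc k))"
          by (auto simp: eventually_sequentially)
        have "\<not> Q \<omega> k" unfolding Q_def using k False by (auto simp: not_le)
        then show False using allQ by blast
      qed
    qed
    moreover have "hit_time \<alpha> X Z l \<omega> \<le> ereal c \<longleftrightarrow> (\<exists>s. 0 \<le> s \<and> s \<le> c \<and> f \<omega> s \<le> 0)"
      unfolding f_def by (rule hit_le_iff[of l \<alpha> Z \<omega> X c]) (use assms(1,2) assms(4)[OF \<omega>] in auto)
    ultimately show ?thesis by simp
  qed
  have mq: "Measurable.pred M (\<lambda>\<omega>. 0 \<le> real_of_rat q \<and> real_of_rat q \<le> c \<and> f \<omega> (real_of_rat q) \<le> inverse (real (Suc k)))" for q k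
  proof (cases "0 \<le> real_of_rat q \<and> real_of_rat q \<le> c")
    case True
    have "(\<lambda>\<omega>. X \<omega> + Z (real_of_rat q) \<omega>) \<in> borel_measurable M" using assms(5) True by blast
    from borel_measurable_diff[OF this borel_measurable_const]
    have g: "(\<lambda>\<omega>. f \<omega> (real_of_rat q)) \<in> borel_measurable M"
      unfolding f_def .
    have "Measurable.pred M (\<lambda>\<omega>. f \<omega> (real_of_rat q) \<le> inverse (real (Suc k)))"
      unfolding pred_def by (rule borel_measurable_le[OF g borel_measurable_const])
    moreover have "(\<lambda>\<omega>. 0 \<le> real_of_rat q \<and> real_of_rat q \<le> c \<and> f \<omega> (real_of_rat q) \<le> inverse (real (Suc k)))
       = (\<lambda>\<omega>. f \<omega> (real_of_rat q) \<le> inverse (real (Suc k)))" using True by blast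
    ultimately show ?thesis by metis
  next
    case False
    have "(\<lambda>\<omega>. 0 \<le> real_of_rat q \<and> real_of_rat q \<le> c \<and> f \<omega> (real_of_rat q) \<le> inverse (real (Suc k)))
       = (\<lambda>\<omega>. False)" using False by blast
    then show ?thesis by (simp only: pred_def) simp
  qed
  have mc: "Measurable.pred M (\<lambda>\<omega>. f \<omega> c \<le> inverse (real (Suc k)))" for k
  proof -
    have "(\<lambda>\<omega>. X \<omega> + Z c \<omega>) \<in> borel_measurable M" using assms(5) False by simp
    from borel_measurable_diff[OF this borel_measurable_const]
    have g: "(\<lambda>\<omega>. f \<omega> c) \<in> borel_measurable M"
      unfolding f_def .
    show ?thesis unfolding pred_def by (rule borel_measurable_le[OF g borel_measurable_const])
  qed
  have "Measurable.pred M (\<lambda>\<omega>. \<forall>k. Q \<omega> k)"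
    unfolding Q_def by (rule pred_intros_countable(1), rule pred_intros_logic(5)[OF mc pred_intros_countable(2)[OF mq]])
  then have "{\<omega> \<in> space M. \<forall>k. Q \<omega> k} \<in> sets M" by (simp add: pred_def)
  also have "{\<omega> \<in> space M. \<forall>k. Q \<omega> k} = {\<omega> \<in> space M. hit_time \<alpha> X Z l \<omega> \<le> ereal c}"
    using eq assms(3) by auto
  finally show ?thesis .
qed


lemma nf_meas:
  assumes "\<And>s. 0 \<le> s \<Longrightarrow> (\<lambda>\<omega>. X \<omega> + Z s \<omega>) \<in> borel_measurable P" "0 \<le> q" "ereal q \<le> t"
  shows "(\<lambda>\<omega>. X \<omega> + Z q \<omega>) \<in> borel_measurable (nat_filtration P (\<lambda>s \<omega>. X \<omega> + Z s \<omega>) t)"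
proof -
  define G where "G = {(\<lambda>\<omega>. X \<omega> + Z s \<omega>) -` B \<inter> space P | s B. 0 \<le> s \<and> ereal s \<le> t \<and> B \<in> sets borel}"
  have G: "G \<subseteq> Pow (space P)" unfolding G_def by auto
  have nf: "nat_filtration P (\<lambda>s \<omega>. X \<omega> + Z s \<omega>) t = sigma (space P) G"
    unfolding nat_filtration_def G_def by simp
  show ?thesis unfolding nf
  proof (rule measurableI)
    fix A :: "real set" assume "A \<in> sets borel"
    then have "(\<lambda>\<omega>. X \<omega> + Z q \<omega>) -` A \<inter> space P \<in> G" unfolding G_def using assms(2,3) by blast
    then show "(\<lambda>\<omega>. X \<omega> + Z q \<omega>) -` A \<inter> space (sigma (space P) G) \<in> sets (sigma (space P) G)"
      using G by (simp add: space_measure_of sets_measure_of)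
  qed simp
qed

lemma stop:
  assumes "in_M l" "\<alpha> > 0"
    "\<And>\<omega>. \<omega> \<in> space P \<Longrightarrow> continuous_on {0..} (\<lambda>t. Z t \<omega>)"
    "\<And>s. 0 \<le> s \<Longrightarrow> (\<lambda>\<omega>. X \<omega> + Z s \<omega>) \<in> borel_measurable P"
  shows "stopping_time (nat_filtration P (\<lambda>s \<omega>. X \<omega> + Z s \<omega>)) (hit_time \<alpha> X Z l)"
  unfolding stopping_time_def
proof
  fix t :: ereal
  have sp: "space (nat_filtration P (\<lambda>s \<omega>. X \<omega> + Z s \<omega>) t) = space P"
    unfolding nat_filtration_def by (rule space_measure_of) auto
  show "Measurable.pred (nat_filtration P (\<lambda>s \<omega>. X \<omega> + Z s \<omega>) t) (\<lambda>x. hit_time \<alpha> X Z l x \<le> t)"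
  proof (cases t)
    case (real c)
    show ?thesis unfolding pred_def real
      by (rule hit_meas[OF assms(1,2) sp[unfolded real]]) (auto intro!: nf_meas assms(3,4) simp: real)
  next
    case PInf then show ?thesis by (simp add: pred_def)
  next
    case MInf
    have "hit_time \<alpha> X Z l x \<noteq> -\<infinity>" for x using hit_nonneg[of \<alpha> X Z l x] by auto
    then show ?thesis using MInf by (simp add: pred_def)
  qed
qed


lemma P1:
  assumes "in_M l" "\<And>n. in_M (ls n)" "\<alpha> > 0" "conv_M ls l"
    "continuous_on {0..} (\<lambda>t. Z t \<omega>)" "\<And>n. \<Delta> n > 0" "0 \<le> r"
    "\<not> hit_time \<alpha> X Z l \<omega> \<le> ereal r"
  shows "eventually (\<lambda>n. \<not> hit_time_disc \<alpha> X Z (\<Delta> n) (ls n) \<omega> \<le> ereal r) sequentially"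
proof -
  have H: "X \<omega> + Z s \<omega> - \<alpha> * l (ereal s) > 0" if "0 \<le> s" "s \<le> r" for s
  proof -
    have hl: "hit_time \<alpha> X Z l \<omega> \<le> ereal r \<longleftrightarrow> (\<exists>s. 0 \<le> s \<and> s \<le> r \<and> X \<omega> + Z s \<omega> - \<alpha> * l (ereal s) \<le> 0)"
      by (rule hit_le_iff[of l \<alpha> Z \<omega> X r]) (use assms(1,3,5) in auto)
    show ?thesis using hl assms(8) that by (meson not_le)
  qed
  have cont: "continuous_on {0..} (\<lambda>t. X \<omega> + Z t \<omega>)"
    by (intro continuous_intros assms(5))
  have ml: "mono l" using assms(1) by (simp add: in_M_def)
  have ev: "eventually (\<lambda>n. \<forall>v\<in>{0..r}. X \<omega> + Z v \<omega> - \<alpha> * ls n (ereal v) > 0) sequentially"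
  proof (rule cover)
    fix s assume s: "s \<in> {0..r}"
    define c where "c = (X \<omega> + Z s \<omega> - \<alpha> * l (ereal s)) / 4"
    have c: "c > 0" using H[of s] s by (simp add: c_def)
    have "continuous (at s within {0..}) (\<lambda>t. X \<omega> + Z t \<omega>)"
      using cont s continuous_on_eq_continuous_within by auto
    then obtain d2 where d2: "d2 > 0" "\<And>v. v \<in> {0..} \<Longrightarrow> dist v s < d2 \<Longrightarrow>
        dist (X \<omega> + Z v \<omega>) (X \<omega> + Z s \<omega>) < c"
      using c unfolding continuous_within_eps_delta by blast
    obtain d1 where d1: "d1 > 0" "\<And>v. s \<le> v \<Longrightarrow> v < s + d1 \<Longrightarrow> l (ereal v) < l (ereal s) + c / \<alpha>"
      using rc[OF assms(1), of "c/\<alpha>" s] c assms(3) by auto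
    obtain u where u: "s < u" "u < s + min d1 d2" "isCont l (ereal u)"
      using contpt[OF assms(1), of s "s + min d1 d2"] d1 d2 by auto
    have "(\<lambda>n. ls n (ereal u)) \<longlonglongrightarrow> l (ereal u)"
      using assms(4) u s unfolding conv_M_def by auto
    then have evu: "eventually (\<lambda>n. ls n (ereal u) < l (ereal u) + c / \<alpha>) sequentially"
      using c assms(3) by (intro order_tendstoD(2)) auto
    have lu: "l (ereal u) < l (ereal s) + c / \<alpha>" using d1(2)[of u] u by auto
    show "\<exists>U. open U \<and> s \<in> U \<and> eventually (\<lambda>n. \<forall>v\<in>U \<inter> {0..r}. X \<omega> + Z v \<omega> - \<alpha> * ls n (ereal v) > 0) sequentially"
    proof (intro exI[of _ "{s - d2<..<u}"] conjI)
      show "eventually (\<lambda>n. \<forall>v\<in>{s - d2<..<u} \<inter> {0..r}. X \<omega> + Z v \<omega> - \<alpha> * ls n (ereal v) > 0) sequentially"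
        using evu
      proof eventually_elim
        case (elim n)
        show ?case
        proof
          fix v assume v: "v \<in> {s - d2<..<u} \<inter> {0..r}"
          have "ls n (ereal v) \<le> ls n (ereal u)"
            using assms(2)[of n] v unfolding in_M_def by (auto intro: monoD)
          then have "ls n (ereal v) < l (ereal s) + 2 * c / \<alpha>" using elim lu by simp
          then have a: "\<alpha> * ls n (ereal v) < \<alpha> * l (ereal s) + 2 * c"
            using assms(3) by (simp add: field_simps)
          have "dist (X \<omega> + Z v \<omega>) (X \<omega> + Z s \<omega>) < c"
            using d2(2)[of v] v u by (auto simp: dist_real_def)
          then have b: "X \<omega> + Z v \<omega> > X \<omega> + Z s \<omega> - c" by (simp add: dist_real_def)
          show "X \<omega> + Z v \<omega> - \<alpha> * ls n (ereal v) > 0"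
            using a b c unfolding c_def by (simp add: field_simps)
        qed
      qed
    qed (use u s d2 in auto)
  qed auto
  then show ?thesis
  proof eventually_elim
    case (elim n)
    show ?case
    proof
      assume "hit_time_disc \<alpha> X Z (\<Delta> n) (ls n) \<omega> \<le> ereal r"
      then obtain k :: nat where k: "\<Delta> n * real k \<le> r"
        "X \<omega> + Z (\<Delta> n * real k) \<omega> - \<alpha> * ls n (ereal (\<Delta> n * real k)) \<le> 0"
        using disc_le_iff[OF assms(6)[of n], of \<alpha> X Z "ls n" \<omega> r] by blast
      have "\<Delta> n * real k \<ge> 0" using assms(6)[of n] by simp
      then show False using elim k by force
    qed
  qed
qed


lemma Pb:
  assumes "in_M l" "\<And>n. in_M (ls n)" "\<alpha> > 0" "conv_M ls l"
    "continuous_on {0..} (\<lambda>t. Z t \<omega>)" "\<And>n. \<Delta> n > 0" "\<Delta> \<longlonglongrightarrow> 0"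
    "\<And>m. \<not> (hit_time \<alpha> X Z l \<omega> < \<infinity> \<and>
        (INF s\<in>{0..1 / real (Suc m)}. Z (real_of_ereal (hit_time \<alpha> X Z l \<omega>) + s) \<omega>
           - Z (real_of_ereal (hit_time \<alpha> X Z l \<omega>)) \<omega>) = 0)"
    "hit_time \<alpha> X Z l \<omega> < ereal r"
  shows "eventually (\<lambda>n. hit_time_disc \<alpha> X Z (\<Delta> n) (ls n) \<omega> \<le> ereal r) sequentially"
proof -
  define a where "a = real_of_ereal (hit_time \<alpha> X Z l \<omega>)"
  have hnn: "0 \<le> hit_time \<alpha> X Z l \<omega>" by (rule hit_nonneg)
  have ha: "hit_time \<alpha> X Z l \<omega> = ereal a"
    using hnn assms(9) unfolding a_def by (cases "hit_time \<alpha> X Z l \<omega>") auto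
  have a0: "0 \<le> a" and ar: "a < r" using hnn assms(9) ha by auto
  have cont: "continuous_on {0..} (\<lambda>t. X \<omega> + Z t \<omega>)"
    by (intro continuous_intros assms(5))
  have ml: "mono l" using assms(1) by (simp add: in_M_def)
  have hl: "hit_time \<alpha> X Z l \<omega> \<le> ereal a \<longleftrightarrow> (\<exists>s. 0 \<le> s \<and> s \<le> a \<and> X \<omega> + Z s \<omega> - \<alpha> * l (ereal s) \<le> 0)"
    by (rule hit_le_iff[of l \<alpha> Z \<omega> X a]) (use assms(1,3,5) in auto)
  then obtain s0 where s0: "0 \<le> s0" "s0 \<le> a" "X \<omega> + Z s0 \<omega> - \<alpha> * l (ereal s0) \<le> 0" using ha by auto
  have "hit_time \<alpha> X Z l \<omega> \<le> ereal s0"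
    unfolding hit_time_def by (rule Inf_lower) (use s0 in auto)
  then have "s0 = a" using s0 ha by auto
  with s0 have fa: "X \<omega> + Z a \<omega> - \<alpha> * l (ereal a) \<le> 0" by simp
  obtain m where m: "inverse (real (Suc m)) < r - a" using reals_Archimedean[of "r - a"] ar by auto
  define h where "h = 1 / real (Suc m)"
  have h: "0 < h" "h < r - a" using m by (auto simp: h_def inverse_eq_divide)
  define I where "I = (\<lambda>s. Z (a + s) \<omega> - Z a \<omega>) ` {0..h}"
  have INF: "Inf I \<noteq> 0" using assms(8)[of m] ha unfolding I_def h_def by auto
  have "continuous_on {0..h} (\<lambda>s. Z (a + s) \<omega>)"
    by (rule continuous_on_compose2[OF assms(5)]) (use a0 in \<open>auto intro!: continuous_intros\<close>)
  then have "continuous_on {0..h} (\<lambda>s. Z (a + s) \<omega> - Z a \<omega>)" by (intro continuous_intros)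
  then have "compact I" unfolding I_def by (intro compact_continuous_image compact_Icc)
  then have bdd: "bdd_below I" by (intro bounded_imp_bdd_below compact_imp_bounded)
  have "0 \<in> I" unfolding I_def using h by (auto intro!: image_eqI[of _ _ 0])
  then have "Inf I \<le> 0" using bdd by (rule cInf_lower)
  with INF have "Inf I < 0" by simp
  then obtain s where s: "s \<in> {0..h}" "Z (a + s) \<omega> - Z a \<omega> < 0"
    using cInf_less_iff[of I 0] bdd \<open>0 \<in> I\<close> unfolding I_def by auto
  have s0': "s > 0" using s by (cases "s = 0") auto
  define w where "w = a + s"
  have w: "a < w" "w < r" using s s0' h unfolding w_def by auto
  define c where "c = (\<alpha> * l (ereal a) - (X \<omega> + Z w \<omega>)) / 3"
  have c: "c > 0" using fa s unfolding c_def w_def by simp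
  have "continuous (at w within {0..}) (\<lambda>t. X \<omega> + Z t \<omega>)"
  proof -
    have "w \<in> {0..}" using w a0 by auto
    then show ?thesis using cont continuous_on_eq_continuous_within by blast
  qed
  then obtain d where d: "d > 0" "\<And>v. v \<in> {0..} \<Longrightarrow> dist v w < d \<Longrightarrow>
      dist (X \<omega> + Z v \<omega>) (X \<omega> + Z w \<omega>) < c"
    using c unfolding continuous_within_eps_delta by blast
  define d' where "d' = min d ((w - a) / 2)"
  have d': "d' > 0" "d' \<le> d" "a < w - d'" using d(1) w unfolding d'_def by (auto simp: min_def field_simps)
  obtain u where u: "a < u" "u < w - d'" "isCont l (ereal u)"
    using contpt[OF assms(1) d'(3)] by auto
  have "(\<lambda>n. ls n (ereal u)) \<longlonglongrightarrow> l (ereal u)"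
    using assms(4) u a0 unfolding conv_M_def by auto
  then have ev1: "eventually (\<lambda>n. ls n (ereal u) > l (ereal u) - c / \<alpha>) sequentially"
    using c assms(3) by (intro order_tendstoD(1)) auto
  have ev2: "eventually (\<lambda>n. \<Delta> n < d') sequentially"
    using d' by (intro order_tendstoD(2)[OF assms(7)]) auto
  have lu: "l (ereal a) \<le> l (ereal u)" using u by (auto intro: monoD[OF ml])
  from ev1 ev2 show ?thesis
  proof eventually_elim
    case (elim n)
    define D where "D = \<Delta> n"
    have D: "D > 0" using assms(6) by (simp add: D_def)
    define k where "k = nat \<lfloor>w / D\<rfloor>"
    have fl0: "\<lfloor>w / D\<rfloor> \<ge> 0" using D w a0 by simp
    have rk: "real k = of_int \<lfloor>w / D\<rfloor>" using fl0 by (simp add: k_def)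
    have f1: "of_int \<lfloor>w / D\<rfloor> \<le> w / D" "w / D < of_int \<lfloor>w / D\<rfloor> + 1" by linarith+
    define g where "g = D * real k"
    have "of_int \<lfloor>w / D\<rfloor> * D \<le> w / D * D" by (rule mult_right_mono[OF f1(1)]) (use D in simp)
    then have g1: "g \<le> w" using D rk unfolding g_def by (simp add: mult.commute)
    have g2: "g > w - D" using f1 D rk unfolding g_def by (simp add: field_simps)
    have gu: "u < g" using g2 elim u unfolding D_def by linarith
    have "dist (X \<omega> + Z g \<omega>) (X \<omega> + Z w \<omega>) < c"
      using d(2)[of g] gu u a0 g1 g2 d' elim unfolding D_def by (auto simp: dist_real_def)
    then have y: "X \<omega> + Z g \<omega> < X \<omega> + Z w \<omega> + c" by (simp add: dist_real_def)
    have "ls n (ereal u) \<le> ls n (ereal g)"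
      using assms(2)[of n] gu unfolding in_M_def by (auto intro: monoD)
    then have "ls n (ereal g) > l (ereal a) - c / \<alpha>" using elim lu by simp
    then have "\<alpha> * ls n (ereal g) > \<alpha> * l (ereal a) - c"
      using assms(3) by (simp add: field_simps)
    then have cond: "X \<omega> + Z g \<omega> - \<alpha> * ls n (ereal g) \<le> 0"
      using y c unfolding c_def by (simp add: field_simps)
    have "D * real k \<le> r" using g1 w unfolding g_def by simp
    then show ?case
      using disc_le_iff[OF assms(6)[of n], of \<alpha> X Z "ls n" \<omega> r] cond unfolding g_def D_def by blast
  qed
qed

theorem proposition2p11:
  fixes P :: "'a measure" and \<alpha> :: real and X :: "'a \<Rightarrow> real" and Z :: "real \<Rightarrow> 'a \<Rightarrow> real"
    and \<Delta> :: "nat \<Rightarrow> real" and ls :: "nat \<Rightarrow> ereal \<Rightarrow> real" and l :: "ereal \<Rightarrow> real"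
  assumes "prob_space P"
    and "\<alpha> > 0"
    and "X \<in> borel_measurable P"
    and "\<And>t. 0 \<le> t \<Longrightarrow> Z t \<in> borel_measurable P"
    and "\<And>\<omega>. \<omega> \<in> space P \<Longrightarrow> continuous_on {0..} (\<lambda>t. Z t \<omega>)"
    and "\<And>\<omega>. \<omega> \<in> space P \<Longrightarrow> Z 0 \<omega> = 0"
    and "prob_space.indep_set P {X -` A \<inter> space P | A. A \<in> sets borel}
         {(\<lambda>\<omega>. restrict (\<lambda>t. Z t \<omega>) {0..}) -` B \<inter> space P | B. B \<in> sets (PiM {0..} (\<lambda>_. borel))}"
    and "crossing_property P X Z"
    and "\<And>n. \<Delta> n > 0" and "\<Delta> \<longlonglongrightarrow> 0"
    and "\<And>n. in_M (ls n)" and "in_M l"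
    and "conv_M ls l"
  shows "conv_M (\<lambda>n. Gam_disc P \<alpha> X Z (\<Delta> n) (ls n)) (Gam P \<alpha> X Z l)"
proof -
  interpret prob_space P by (rule assms(1))
  have Ymeas: "(\<lambda>\<omega>. X \<omega> + Z s \<omega>) \<in> borel_measurable P" if "0 \<le> s" for s
    by (intro borel_measurable_add assms(3) assms(4) that)
  have st: "stopping_time (nat_filtration P (\<lambda>s \<omega>. X \<omega> + Z s \<omega>)) (hit_time \<alpha> X Z l)"
    by (rule stop[OF assms(12,2) assms(5) Ymeas])
  have cross: "AE \<omega> in P. \<not> (hit_time \<alpha> X Z l \<omega> < \<infinity> \<and>
        (INF s\<in>{0..h}. Z (real_of_ereal (hit_time \<alpha> X Z l \<omega>) + s) \<omega>
           - Z (real_of_ereal (hit_time \<alpha> X Z l \<omega>)) \<omega>) = 0)" if "h > 0" for h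
    using assms(8) st that unfolding crossing_property_def by blast
  have AEc: "AE \<omega> in P. \<forall>m. \<not> (hit_time \<alpha> X Z l \<omega> < \<infinity> \<and>
        (INF s\<in>{0..1 / real (Suc m)}. Z (real_of_ereal (hit_time \<alpha> X Z l \<omega>) + s) \<omega>
           - Z (real_of_ereal (hit_time \<alpha> X Z l \<omega>)) \<omega>) = 0)"
    unfolding AE_all_countable by (intro allI cross) simp
  have Bmeas: "{\<omega> \<in> space P. hit_time \<alpha> X Z l \<omega> \<le> ereal c} \<in> sets P" for c
    by (rule hit_meas[OF assms(12,2) refl assms(5)]) (auto intro!: Ymeas)
  have Ameas: "Measurable.pred P (\<lambda>\<omega>. hit_time_disc \<alpha> X Z (\<Delta> n) (ls n) \<omega> \<le> ereal c)" for n c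
  proof -
    have eq: "(\<lambda>\<omega>. hit_time_disc \<alpha> X Z (\<Delta> n) (ls n) \<omega> \<le> ereal c) = (\<lambda>\<omega>. \<exists>k::nat. \<Delta> n * real k \<le> c \<and>
        X \<omega> + Z (\<Delta> n * real k) \<omega> - \<alpha> * ls n (ereal (\<Delta> n * real k)) \<le> 0)"
      by (intro ext disc_le_iff[OF assms(9)])
    have "Measurable.pred P (\<lambda>\<omega>. X \<omega> + Z (\<Delta> n * real k) \<omega> - \<alpha> * ls n (ereal (\<Delta> n * real k)) \<le> 0)" for k
    proof -
      have "0 \<le> \<Delta> n * real k" using assms(9)[of n] by simp
      from borel_measurable_diff[OF Ymeas[OF this] borel_measurable_const]
      show ?thesis unfolding pred_def by (rule borel_measurable_le[OF _ borel_measurable_const])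
    qed
    then show ?thesis unfolding eq
      by (intro pred_intros_countable(2) pred_intros_conj1')
  qed
  show ?thesis unfolding conv_M_def
  proof (intro allI impI)
    fix t :: ereal assume t0: "0 \<le> t" and ct: "isCont (Gam P \<alpha> X Z l) t"
    show "(\<lambda>n. Gam_disc P \<alpha> X Z (\<Delta> n) (ls n) t) \<longlonglongrightarrow> Gam P \<alpha> X Z l t"
    proof (cases t)
      case PInf then show ?thesis by (simp add: Gam_def Gam_disc_def)
    next
      case MInf then show ?thesis using t0 by simp
    next
      case (real r)
      have r0: "0 \<le> r" using t0 real by simp
      define A where "A n = {\<omega> \<in> space P. hit_time_disc \<alpha> X Z (\<Delta> n) (ls n) \<omega> \<le> ereal r}" for n
      define B where "B c = {\<omega> \<in> space P. hit_time \<alpha> X Z l \<omega> \<le> ereal c}" for c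
      have As: "A n \<in> sets P" for n using Ameas[of n r] unfolding A_def pred_def .
      have Bs: "B c \<in> sets P" for c using Bmeas unfolding B_def .
      have GA: "Gam_disc P \<alpha> X Z (\<Delta> n) (ls n) (ereal r) = measure P (A n)" for n
        unfolding Gam_disc_def A_def ..
      have GB: "Gam P \<alpha> X Z l (ereal c) = measure P (B c)" for c
        unfolding Gam_def B_def ..
      show ?thesis unfolding real GA GB
      proof (rule order_tendstoI[rotated])
        fix a assume a: "a > measure P (B r)"
        define C where "C m = {\<omega> \<in> space P. \<exists>n. m \<le> n \<and> hit_time_disc \<alpha> X Z (\<Delta> n) (ls n) \<omega> \<le> ereal r}" for m
        have Cs: "C m \<in> sets P" for m
        proof -
          have "Measurable.pred P (\<lambda>\<omega>. \<exists>n. m \<le> n \<and> hit_time_disc \<alpha> X Z (\<Delta> n) (ls n) \<omega> \<le> ereal r)"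
            by (intro pred_intros_countable(2) pred_intros_conj1' Ameas)
          then show ?thesis unfolding C_def pred_def .
        qed
        have dec: "decseq C" unfolding decseq_def C_def by (auto intro: order_trans)
        have lim: "(\<lambda>m. measure P (C m)) \<longlonglongrightarrow> measure P (\<Inter>m. C m)"
          by (rule finite_Lim_measure_decseq) (use Cs dec in auto)
        have sub: "(\<Inter>m. C m) \<subseteq> B r"
        proof
          fix \<omega> assume \<omega>: "\<omega> \<in> (\<Inter>m. C m)"
          then have sp: "\<omega> \<in> space P" unfolding C_def by auto
          show "\<omega> \<in> B r"
          proof (rule ccontr)
            assume "\<omega> \<notin> B r"
            then have "\<not> hit_time \<alpha> X Z l \<omega> \<le> ereal r" using sp unfolding B_def by auto
            then have "eventually (\<lambda>n. \<not> hit_time_disc \<alpha> X Z (\<Delta> n) (ls n) \<omega> \<le> ereal r) sequentially"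
              by (rule P1[where Z=Z and \<omega>=\<omega> and X=X, OF assms(12,11,2,13) assms(5)[OF sp] assms(9) r0])
            then obtain N where N: "\<And>n. n \<ge> N \<Longrightarrow> \<not> hit_time_disc \<alpha> X Z (\<Delta> n) (ls n) \<omega> \<le> ereal r"
              by (auto simp: eventually_sequentially)
            from \<omega> have "\<omega> \<in> C N" by auto
            then show False using N unfolding C_def by auto
          qed
        qed
        have "measure P (\<Inter>m. C m) \<le> measure P (B r)"
          by (rule finite_measure_mono[OF sub Bs])
        then have "eventually (\<lambda>m. measure P (C m) < a) sequentially"
          using a by (intro order_tendstoD(2)[OF lim]) auto
        then show "eventually (\<lambda>m. measure P (A m) < a) sequentially"
        proof eventually_elim
          case (elim m)
          have "A m \<subseteq> C m" unfolding A_def C_def by auto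
          then have "measure P (A m) \<le> measure P (C m)" by (rule finite_measure_mono[OF _ Cs])
          then show ?case using elim by simp
        qed
      next
        fix a assume a: "a < measure P (B r)"
        have "(\<lambda>k. ereal (r - inverse (real (Suc k)))) \<longlonglongrightarrow> ereal r"
        proof -
          have "(\<lambda>k. r - inverse (real (Suc k))) \<longlonglongrightarrow> r - 0"
            by (intro tendsto_diff tendsto_const LIMSEQ_inverse_real_of_nat)
          then show ?thesis unfolding lim_ereal by simp
        qed
        then have "(\<lambda>k. Gam P \<alpha> X Z l (ereal (r - inverse (real (Suc k))))) \<longlonglongrightarrow> Gam P \<alpha> X Z l (ereal r)"
          using ct real by (intro isCont_tendsto_compose[of _ "Gam P \<alpha> X Z l"]) auto
        then have "eventually (\<lambda>k. measure P (B (r - inverse (real (Suc k)))) > a) sequentially"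
          unfolding GB using a by (intro order_tendstoD(1)) auto
        then obtain k where k: "measure P (B (r - inverse (real (Suc k)))) > a"
          by (auto simp: eventually_sequentially)
        define D where "D m = {\<omega> \<in> space P. \<forall>n. m \<le> n \<longrightarrow> hit_time_disc \<alpha> X Z (\<Delta> n) (ls n) \<omega> \<le> ereal r}" for m
        have Ds: "D m \<in> sets P" for m
        proof -
          have "Measurable.pred P (\<lambda>\<omega>. \<forall>n. m \<le> n \<longrightarrow> hit_time_disc \<alpha> X Z (\<Delta> n) (ls n) \<omega> \<le> ereal r)"
            by (intro pred_intros_countable(1) pred_intros_imp' Ameas)
          then show ?thesis unfolding D_def pred_def .
        qed
        have inc: "incseq D" unfolding incseq_def D_def by auto
        have lim: "(\<lambda>m. measure P (D m)) \<longlonglongrightarrow> measure P (\<Union>m. D m)"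
          by (rule finite_Lim_measure_incseq) (use Ds inc in auto)
        have "AE \<omega> in P. \<omega> \<in> B (r - inverse (real (Suc k))) \<longrightarrow> \<omega> \<in> (\<Union>m. D m)"
          using AEc AE_space
        proof eventually_elim
          case (elim \<omega>)
          show ?case
          proof
            assume "\<omega> \<in> B (r - inverse (real (Suc k)))"
            then have "hit_time \<alpha> X Z l \<omega> \<le> ereal (r - inverse (real (Suc k)))" unfolding B_def by auto
            also have "\<dots> < ereal r" by simp
            finally have hr: "hit_time \<alpha> X Z l \<omega> < ereal r" .
            have "eventually (\<lambda>n. hit_time_disc \<alpha> X Z (\<Delta> n) (ls n) \<omega> \<le> ereal r) sequentially"
              by (rule Pb[where Z=Z and \<omega>=\<omega> and X=X, OF assms(12,11,2,13) assms(5)[OF elim(2)] assms(9,10) _ hr]) (use elim(1) in auto)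
            then obtain N where "\<And>n. n \<ge> N \<Longrightarrow> hit_time_disc \<alpha> X Z (\<Delta> n) (ls n) \<omega> \<le> ereal r"
              by (auto simp: eventually_sequentially)
            then have "\<omega> \<in> D N" unfolding D_def using elim(2) by auto
            then show "\<omega> \<in> (\<Union>m. D m)" by auto
          qed
        qed
        then have "measure P (B (r - inverse (real (Suc k)))) \<le> measure P (\<Union>m. D m)"
          by (rule finite_measure_mono_AE) (use Ds in auto)
        then have "eventually (\<lambda>m. measure P (D m) > a) sequentially"
          using k by (intro order_tendstoD(1)[OF lim]) auto
        then show "eventually (\<lambda>m. measure P (A m) > a) sequentially"
        proof eventually_elim
          case (elim m)
          have "D m \<subseteq> A m" unfolding A_def D_def by auto
          then have "measure P (D m) \<le> measure P (A m)" by (rule finite_measure_mono[OF _ As])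
          then show ?case using elim by simp
        qed
      qed
    qed
  qed
qed

end
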